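(* Let $L,n$ be positive integers and $B=(B_1,\dots,B_L)\in\mathcal M(L,n)$. Then $\rho_N(B)\in\mathrm{MLQ}_0(\mu,n)$ for some partition $\mu$, and $\rho_Q(B)$ is a semistandard Young tableau of shape $\mu'$ with content $(|B_1|,\dots,|B_L|)$.
   Context: $\mathcal M(L,n)$ is the set of tuples $B=(B_1,\dots,B_L)$ of subsets of $[n]$, drawn with rows $1..L$ bottom to top and columns $1..n$ left to right, ball in $(r,j)$ iff $j\in B_r$; tuples whose top rows are empty are identified with the tuple obtained by deleting those rows. For a partition $\mu$ ($\mu'$ its conjugate) with $n\ge\ell(\mu)$, $\mathrm{MLQ}(\mu,n)$ is the set of tuples $(B_1,\dots,B_{\mu_1})$ with $|B_j|=\mu'_j$. Diagrams are in French notation (row 1 at the bottom); semistandard means weakly increasing along rows, strictly increasing up columns; content $(c_1,c_2,\dots)$ counts entries equal to $1,2,\dots$. The column word $\mathrm{cw}(B)$ scans columns left to right, each top to bottom, recording row numbers of balls. Major index: for $M\in\mathrm{MLQ}(\mu,n)$, for $r=\mu_1,\dots,2$, unlabelled balls of row $r$ get label $r$; then balls of row $r$ in decreasing label order (left to right among ties) are each paired with the first unlabelled ball of row $r-1$ weakly to the right, cyclically modulo $n$, which gets the same label; a pairing wraps if the lower ball is strictly left of the upper. $\operatorname{maj}(M)=\sum(\ell(p)-r(p)+1)$ over wrapping pairings ($r(p)$ upper row, $\ell(p)$ label); $\mathrm{MLQ}_0(\mu,n)$ is the set of $M$ with $\operatorname{maj}(M)=0$. Collapsing. $\mathrm{Par}_i(w)$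 writes "(" for each letter $i+1$ and ")" for each letter $i$ of $w$, left to right, and iteratively matches a "(" with a ")" to its right when adjacent or separated only by matched parentheses. $e_i^\star(B)$ moves every ball of row $i+1$ whose letter in $\mathrm{cw}(B)$ is unmatched in $\mathrm{Par}_i(\mathrm{cw}(B))$ down to row $i$ in the same column. Products act right to left; $e^\star_{[a,b]}=e^\star_ae^\star_{a+1}\cdots e^\star_b$; $\rho_N(B)=e^\star_{[1,L-1]}\cdots e^\star_{[1,1]}(B)$. Let $N^{(k)}$ be the bottom $k$ rows of $e^\star_{[1,k-1]}\cdots e^\star_{[1,1]}(B)$ for $1\le k\le L$, $N^{(0)}$ empty; $\rho_Q(B)$ is the filling (in French notation) whose row $r$ consists of $|N^{(i)}_r|-|N^{(i-1)}_r|$ entries equal to $i$ for each $i=1,\dots,L$ (with $|N^{(i-1)}_i|=0$), written in weakly increasing order. *)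

theory Defs
  imports Main
begin

text \<open>Ball arrangements are represented as functions B :: nat => nat set,
  B r being the set of columns of the balls in row r (rows numbered from 1,
  bottom to tp).  Row 0 and rows above the last row are empty; thus tuples
  differing only by empty tp rows are automatically identified.\<close>

definition MLset :: "nat \<Rightarrow> nat \<Rightarrow> (nat \<Rightarrow> nat set) set" where
  "MLset L n = {B. (\<forall>r. 1 \<le> r \<and> r \<le> L \<longrightarrow> B r \<subseteq> {1..n})
                   \<and> (\<forall>r. (r = 0 \<or> L < r) \<longrightarrow> B r = {})}"

definition is_partition :: "nat list \<Rightarrow> bool" where
  "is_partition mu \<longleftrightarrow> sorted_wrt (\<ge>) mu \<and> 0 \<notin> set mu"

text \<open>Parts of the conjugate partition: conj mu j = mu'_j (for j >= 1).\<close>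
definition conj :: "nat list \<Rightarrow> nat \<Rightarrow> nat" where
  "conj mu j = card {i. i < length mu \<and> j \<le> mu ! i}"

definition first_part :: "nat list \<Rightarrow> nat" where
  "first_part mu = (if mu = [] then 0 else hd mu)"

definition MLQ :: "nat list \<Rightarrow> nat \<Rightarrow> (nat \<Rightarrow> nat set) set" where
  "MLQ mu n = {M. (\<forall>j. 1 \<le> j \<and> j \<le> first_part mu \<longrightarrow>
                        M j \<subseteq> {1..n} \<and> card (M j) = conj mu j)
                 \<and> (\<forall>j. (j = 0 \<or> first_part mu < j) \<longrightarrow> M j = {})}"

text \<open>First column of S weakly to the right of c, cyclically (columns lie in 1..n).\<close>
definition cyc_next :: "nat \<Rightarrow> nat set \<Rightarrow> nat" where
  "cyc_next c S = (if \<exists>x\<in>S. c \<le> x then Min {x\<in>S. c \<le> x} else Min S)"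

text \<open>Pair the balls of row r (given as a list of (column, label) in processing
  order) with balls of row r-1 (column set S); lab is the partial labelling of
  row r-1; acc accumulates the contributions of wrapping pairings.\<close>
fun pair_seq :: "nat \<Rightarrow> nat set \<Rightarrow> (nat \<times> nat) list \<Rightarrow> (nat \<Rightarrow> nat option) \<Rightarrow> nat
                 \<Rightarrow> (nat \<Rightarrow> nat option) \<times> nat" where
  "pair_seq r S [] lab acc = (lab, acc)"
| "pair_seq r S ((c, l) # ps) lab acc =
     (let c' = cyc_next c {x \<in> S. lab x = None}
      in pair_seq r S ps (lab(c' := Some l))
           (if c' < c then acc + (l + 1 - r) else acc))"

text \<open>maj_aux tp M r lab (tp = top row): contributions of rows r, r-1, ..., 2, where lab is the
  labelling of row r obtained so far from the pairings with row r+1.\<close>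
fun maj_aux :: "nat \<Rightarrow> (nat \<Rightarrow> nat set) \<Rightarrow> nat \<Rightarrow> (nat \<Rightarrow> nat option) \<Rightarrow> nat" where
  "maj_aux tp M 0 lab = 0"
| "maj_aux tp M (Suc 0) lab = 0"
| "maj_aux tp M (Suc (Suc k)) lab =
     (let r = Suc (Suc k);
          labr = (\<lambda>c. case lab c of Some l \<Rightarrow> Some l
                                  | None \<Rightarrow> (if c \<in> M r then Some r else None));
          seq = concat (map (\<lambda>l. map (\<lambda>c. (c, l))
                                    (sorted_list_of_set {c \<in> M r. labr c = Some l}))
                           (rev [r..<tp + 1]));
          res = pair_seq r (M (Suc k)) seq (\<lambda>_. None) 0
      in snd res + maj_aux tp M (Suc k) (fst res))"

definition maj :: "nat list \<Rightarrow> (nat \<Rightarrow> nat set) \<Rightarrow> nat" where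
  "maj mu M = maj_aux (first_part mu) M (first_part mu) (\<lambda>_. None)"

definition MLQ0 :: "nat list \<Rightarrow> nat \<Rightarrow> (nat \<Rightarrow> nat set) set" where
  "MLQ0 mu n = {M \<in> MLQ mu n. maj mu M = 0}"

text \<open>Column word, as the list of ball positions (row, column): columns 1..n left
  to right, each read tp (row L) to bottom; the letters are the rows.\<close>
definition cwp :: "nat \<Rightarrow> nat \<Rightarrow> (nat \<Rightarrow> nat set) \<Rightarrow> (nat \<times> nat) list" where
  "cwp L n B = concat (map (\<lambda>j. map (\<lambda>r. (r, j)) (filter (\<lambda>r. j \<in> B r) (rev [1..<L + 1])))
                           [1..<n + 1])"

definition cw :: "nat \<Rightarrow> nat \<Rightarrow> (nat \<Rightarrow> nat set) \<Rightarrow> nat list" where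
  "cw L n B = map fst (cwp L n B)"

text \<open>Parenthesis matching Par_i: letter i+1 is "(", letter i is ")".  Scanning
  left to right, each ")" is matched with the nearest preceding unmatched "("
  (this realises the iterative matching).  The result is the list of positions
  (0-based) of the unmatched "(".\<close>
fun unm :: "nat \<Rightarrow> nat list \<Rightarrow> nat list \<Rightarrow> nat \<Rightarrow> nat list" where
  "unm i st [] k = st"
| "unm i st (x # xs) k =
     (if x = i + 1 then unm i (k # st) xs (k + 1)
      else if x = i then unm i (drop 1 st) xs (k + 1)
      else unm i st xs (k + 1))"

definition unmatched_open :: "nat \<Rightarrow> nat list \<Rightarrow> nat set" where
  "unmatched_open i w = set (unm i [] w 0)"

definition estar :: "nat \<Rightarrow> nat \<Rightarrow> nat \<Rightarrow> (nat \<Rightarrow> nat set) \<Rightarrow> (nat \<Rightarrow> nat set)" where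
  "estar L n i B =
     (let w = cwp L n B;
          Mv = {snd (w ! k) | k. k \<in> unmatched_open i (cw L n B)}
      in B(i + 1 := B (i + 1) - Mv, i := B i \<union> Mv))"

text \<open>estar_seg L n b = e*_{[1,b]} = e*_1 e*_2 ... e*_b (e*_b applied first).\<close>
fun estar_seg :: "nat \<Rightarrow> nat \<Rightarrow> nat \<Rightarrow> (nat \<Rightarrow> nat set) \<Rightarrow> (nat \<Rightarrow> nat set)" where
  "estar_seg L n 0 B = B"
| "estar_seg L n (Suc b) B = estar_seg L n b (estar L n (Suc b) B)"

text \<open>stage L n k B = e*_{[1,k-1]} ... e*_{[1,1]} (B).\<close>
fun stage :: "nat \<Rightarrow> nat \<Rightarrow> nat \<Rightarrow> (nat \<Rightarrow> nat set) \<Rightarrow> (nat \<Rightarrow> nat set)" where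
  "stage L n 0 B = B"
| "stage L n (Suc k) B = estar_seg L n k (stage L n k B)"

definition rhoN :: "nat \<Rightarrow> nat \<Rightarrow> (nat \<Rightarrow> nat set) \<Rightarrow> (nat \<Rightarrow> nat set)" where
  "rhoN L n B = stage L n L B"

text \<open>Number of entries i in row r of rho_Q(B): |N^(i)_r| - |N^(i-1)_r|, where
  N^(k)_r = row r of stage k for r <= k, and |N^(i-1)_i| = 0.  Computed in int.\<close>
definition rhoQ_mult :: "nat \<Rightarrow> nat \<Rightarrow> (nat \<Rightarrow> nat set) \<Rightarrow> nat \<Rightarrow> nat \<Rightarrow> int" where
  "rhoQ_mult L n B r i =
     (if 1 \<le> r \<and> r \<le> i \<and> i \<le> L
      then int (card (stage L n i B r))
           - (if r < i then int (card (stage L n (i - 1) B r)) else 0)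
      else 0)"

definition rhoQ :: "nat \<Rightarrow> nat \<Rightarrow> (nat \<Rightarrow> nat set) \<Rightarrow> nat \<Rightarrow> nat list" where
  "rhoQ L n B r =
     (if 1 \<le> r \<and> r \<le> L
      then concat (map (\<lambda>i. replicate (nat (rhoQ_mult L n B r i)) i) [1..<L + 1])
      else [])"

text \<open>Semistandard Young tableau (French notation) with row lengths sh 1, sh 2, ...:
  positive entries, rows weakly increasing, columns strictly increasing upward.\<close>
definition is_ssyt :: "(nat \<Rightarrow> nat list) \<Rightarrow> (nat \<Rightarrow> nat) \<Rightarrow> bool" where
  "is_ssyt T sh \<longleftrightarrow>
     T 0 = [] \<and>
     (\<forall>r. 1 \<le> r \<longrightarrow> length (T r) = sh r) \<and>
     (\<forall>r. \<forall>x \<in> set (T r). 1 \<le> x) \<and>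
     (\<forall>r. sorted (T r)) \<and>
     (\<forall>r c. 1 \<le> r \<and> c < length (T (r + 1)) \<longrightarrow> T r ! c < T (r + 1) ! c)"

end

theory Submission
  imports Defs
begin


definition stp :: "nat \<Rightarrow> nat \<Rightarrow> nat \<Rightarrow> nat" where
  "stp i x t = (if x = Suc i then t - 1 else if x = i then t + 1 else t)"

definition aaT :: "nat \<Rightarrow> nat list \<Rightarrow> nat \<Rightarrow> nat" where
  "aaT i xs t = foldr (stp i) xs t"

lemma aaT_Nil[simp]: "aaT i [] t = t" by (simp add: aaT_def)
lemma aaT_Cons[simp]: "aaT i (x # xs) t = stp i x (aaT i xs t)" by (simp add: aaT_def)
lemma aaT_append[simp]: "aaT i (xs @ ys) t = aaT i xs (aaT i ys t)" by (simp add: aaT_def)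

lemma unm_split: "unm i st w k = unm i [] w k @ drop (aaT i w 0) st"
proof (induction w arbitrary: st k)
  case Nil then show ?case by simp
next
  case (Cons x w)
  show ?case
  proof (cases "x = Suc i")
    case True
    have "unm i st (x # w) k = unm i [] w (k+1) @ drop (aaT i w 0) (k # st)"
      using True Cons[of "k # st"] by simp
    moreover have "unm i [] (x # w) k = unm i [] w (k+1) @ drop (aaT i w 0) [k]"
      using True Cons[of "[k]"] by simp
    moreover have "drop (aaT i w 0) (k # st) = drop (aaT i w 0) [k] @ drop (aaT i w 0 - 1) st"
      by (cases "aaT i w 0") auto
    ultimately show ?thesis using True by (simp add: stp_def)
  next
    case False
    then show ?thesis using Cons[of "drop 1 st"] Cons[of st] Cons[of "[]"]
      by (auto simp: stp_def add.commute)
  qed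
qed

lemma unm_mem: "m \<in> set (unm i [] w k) \<longleftrightarrow>
   (k \<le> m \<and> m - k < length w \<and> w ! (m - k) = Suc i \<and> aaT i (drop (Suc (m - k)) w) 0 = 0)"
proof (induction w arbitrary: k)
  case Nil then show ?case by simp
next
  case (Cons x w)
  have e: "unm i [] (x # w) k = (if x = Suc i then unm i [] w (k+1) @ drop (aaT i w 0) [k]
            else unm i [] w (k+1))"
    using unm_split[of i "[k]" w "k+1"] by auto
  show ?case
  proof (cases "m = k")
    case True
    then show ?thesis unfolding e using Cons[of "k+1"]
      by (cases "aaT i w 0") auto
  next
    case False
    then have "(k \<le> m) = (Suc k \<le> m)" by auto
    moreover have "Suc k \<le> m \<Longrightarrow> m - k = Suc (m - Suc k)" by auto
    ultimately show ?thesis unfolding e using Cons[of "k+1"] False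
      by (cases "aaT i w 0") (auto simp: nth_Cons split: nat.splits)
  qed
qed

definition movedT :: "nat \<Rightarrow> nat \<Rightarrow> (nat \<times> nat) list \<Rightarrow> nat set" where
  "movedT i t w = {snd (w ! j) | j. j < length w \<and> fst (w ! j) = Suc i
                     \<and> aaT i (map fst (drop (Suc j) w)) t = 0}"

lemma movedT_Nil[simp]: "movedT i t [] = {}" by (simp add: movedT_def)

lemma movedT_Cons: "movedT i t (x # w) =
   (if fst x = Suc i \<and> aaT i (map fst w) t = 0 then {snd x} else {}) \<union> movedT i t w"
proof (rule set_eqI, rule iffI)
  fix y assume "y \<in> movedT i t (x # w)"
  then obtain j where j: "y = snd ((x#w) ! j)" "j < length (x#w)" "fst ((x#w) ! j) = Suc i"
     "aaT i (map fst (drop (Suc j) (x#w))) t = 0" unfolding movedT_def by blast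
  show "y \<in> (if fst x = Suc i \<and> aaT i (map fst w) t = 0 then {snd x} else {}) \<union> movedT i t w"
  proof (cases j)
    case 0 then show ?thesis using j by simp
  next
    case (Suc j')
    then have "y \<in> movedT i t w" using j unfolding movedT_def by auto
    then show ?thesis by blast
  qed
next
  fix y assume y: "y \<in> (if fst x = Suc i \<and> aaT i (map fst w) t = 0 then {snd x} else {}) \<union> movedT i t w"
  show "y \<in> movedT i t (x # w)"
  proof (cases "y \<in> movedT i t w")
    case True
    then obtain j where j: "y = snd (w ! j)" "j < length w" "fst (w ! j) = Suc i"
     "aaT i (map fst (drop (Suc j) w)) t = 0" unfolding movedT_def by blast
    then show ?thesis unfolding movedT_def
      by (intro CollectI exI[of _ "Suc j"]) auto
  next
    case False
    then have "fst x = Suc i" "aaT i (map fst w) t = 0" "y = snd x" using y by (auto split: if_splits)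
    then show ?thesis unfolding movedT_def
      by (intro CollectI exI[of _ 0]) auto
  qed
qed

lemma movedT_append: "movedT i t (w1 @ w2) = movedT i (aaT i (map fst w2) t) w1 \<union> movedT i t w2"
  by (induction w1) (auto simp: movedT_Cons)

lemma Mv_eq: "{snd (cwp L n B ! k) | k. k \<in> unmatched_open i (cw L n B)} = movedT i 0 (cwp L n B)"
  unfolding unmatched_open_def cw_def movedT_def unm_mem
  by (auto simp: drop_map)



definition colw :: "nat \<Rightarrow> (nat \<Rightarrow> nat set) \<Rightarrow> nat \<Rightarrow> (nat \<times> nat) list" where
  "colw m B c = map (\<lambda>r. (r, c)) (filter (\<lambda>r. c \<in> B r) (rev [1..<m + 1]))"

lemma colw_0[simp]: "colw 0 B c = []" by (simp add: colw_def)
lemma colw_Suc: "colw (Suc m) B c = (if c \<in> B (Suc m) then [(Suc m, c)] else []) @ colw m B c"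
  by (simp add: colw_def)

lemma cwp_colw: "cwp L n B = concat (map (colw L B) [1..<n + 1])"
  unfolding cwp_def colw_def[abs_def] by (rule refl)

lemma colw_aaT:
  assumes "1 \<le> i"
  shows "aaT i (map fst (colw m B c)) t =
     (if Suc i \<le> m then (t + of_bool (c \<in> B i)) - of_bool (c \<in> B (Suc i))
      else if i \<le> m then t + of_bool (c \<in> B i) else t)"
proof (induction m)
  case 0 then show ?case using assms by simp
next
  case (Suc m)
  consider "m = i" | "Suc m = i" | "m \<noteq> i" "Suc m \<noteq> i" by blast
  then show ?case
  proof cases
    case 1 then show ?thesis using Suc by (auto simp: colw_Suc stp_def)
  next
    case 2 then show ?thesis using Suc by (auto simp: colw_Suc stp_def)
  next
    case 3
    then have "aaT i (map fst (colw (Suc m) B c)) t = aaT i (map fst (colw m B c)) t"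
      by (auto simp: colw_Suc stp_def)
    moreover have "(Suc i \<le> Suc m) = (Suc i \<le> m)" "(i \<le> Suc m) = (i \<le> m)" using 3 by auto
    ultimately show ?thesis using Suc by simp
  qed
qed

lemma colw_moved:
  assumes "1 \<le> i"
  shows "movedT i t (colw m B c) =
     (if Suc i \<le> m \<and> c \<in> B (Suc i) \<and> c \<notin> B i \<and> t = 0 then {c} else {})"
proof (induction m)
  case 0 then show ?case by simp
next
  case (Suc m)
  consider "m = i" | "m \<noteq> i" by blast
  then show ?case
  proof cases
    case 1 then show ?thesis using Suc assms by (auto simp: colw_Suc movedT_Cons colw_aaT)
  next
    case 2
    then have "movedT i t (colw (Suc m) B c) = movedT i t (colw m B c)"
      by (auto simp: colw_Suc movedT_Cons)
    moreover have "(Suc i \<le> Suc m) = (Suc i \<le> m)" using 2 by auto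
    ultimately show ?thesis using Suc by simp
  qed
qed

definition gA :: "nat set \<Rightarrow> nat set \<Rightarrow> nat \<Rightarrow> nat \<Rightarrow> nat" where
  "gA U D x t = (t + of_bool (x \<in> D)) - of_bool (x \<in> U)"

definition AA :: "nat set \<Rightarrow> nat set \<Rightarrow> nat \<Rightarrow> nat \<Rightarrow> nat" where
  "AA U D n c = foldr (gA U D) [c..<Suc n] 0"

definition mv :: "nat set \<Rightarrow> nat set \<Rightarrow> nat \<Rightarrow> nat set" where
  "mv U D n = {c. c \<le> n \<and> c \<in> U \<and> c \<notin> D \<and> AA U D n (Suc c) = 0}"

lemma AA_big: "n < c \<Longrightarrow> AA U D n c = 0" by (simp add: AA_def)
lemma AA_step: "c \<le> n \<Longrightarrow> AA U D n c = (AA U D n (Suc c) + of_bool (c \<in> D)) - of_bool (c \<in> U)"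
  by (simp add: AA_def upt_conv_Cons gA_def del: upt_Suc)

lemma concat_aaT:
  assumes "1 \<le> i" "Suc i \<le> L"
  shows "aaT i (map fst (concat (map (colw L B) cs))) t = foldr (gA (B (Suc i)) (B i)) cs t"
  by (induction cs) (use assms in \<open>auto simp: colw_aaT gA_def\<close>)

lemma concat_moved:
  assumes "1 \<le> i" "Suc i \<le> L" "a \<le> Suc n"
  shows "movedT i 0 (concat (map (colw L B) [a..<Suc n])) =
     {c. a \<le> c \<and> c \<in> mv (B (Suc i)) (B i) n}"
  using assms(3)
proof (induction a rule: inc_induct)
  case base then show ?case by (auto simp: mv_def)
next
  case (step a)
  have e: "[a..<Suc n] = a # [Suc a..<Suc n]" using step by (simp add: upt_conv_Cons)
  have A: "aaT i (map fst (concat (map (colw L B) [Suc a..<Suc n]))) 0 = AA (B (Suc i)) (B i) n (Suc a)"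
    using concat_aaT[OF assms(1,2)] by (simp add: AA_def)
  have "movedT i 0 (concat (map (colw L B) [a..<Suc n])) =
     (if a \<in> B (Suc i) \<and> a \<notin> B i \<and> AA (B (Suc i)) (B i) n (Suc a) = 0 then {a} else {})
     \<union> {c. Suc a \<le> c \<and> c \<in> mv (B (Suc i)) (B i) n}"
    unfolding e using step(3) assms A by (simp add: movedT_append colw_moved)
  also have "\<dots> = {c. a \<le> c \<and> c \<in> mv (B (Suc i)) (B i) n}"
    using step(2) apply (auto simp: mv_def)
    apply (case_tac "x = a"; simp)+
    done
  finally show ?case .
qed

lemma estar_char:
  assumes B: "B \<in> MLset L n" and i: "1 \<le> i" "i < L"
  shows "estar L n i B = B(Suc i := B (Suc i) - mv (B (Suc i)) (B i) n,
                           i := B i \<union> mv (B (Suc i)) (B i) n)"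
proof -
  have "B (Suc i) \<subseteq> {1..n}" using B i unfolding MLset_def by auto
  then have "{c. 1 \<le> c \<and> c \<in> mv (B (Suc i)) (B i) n} = mv (B (Suc i)) (B i) n"
    by (auto simp: mv_def)
  then have "movedT i 0 (cwp L n B) = mv (B (Suc i)) (B i) n"
    unfolding cwp_colw using concat_moved[of i L 1 n B] i by simp
  then show ?thesis unfolding estar_def Let_def Mv_eq by simp
qed



definition cnt :: "nat set \<Rightarrow> nat \<Rightarrow> nat" where
  "cnt S c = card {x \<in> S. c \<le> x}"

definition domi :: "nat set \<Rightarrow> nat set \<Rightarrow> bool" where
  "domi S T \<longleftrightarrow> (\<forall>c. cnt S c \<le> cnt T c)"

lemma cnt_Suc: "finite S \<Longrightarrow> cnt S c = cnt S (Suc c) + of_bool (c \<in> S)"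
proof -
  assume f: "finite S"
  have "{x \<in> S. c \<le> x} = (if c \<in> S then insert c {x \<in> S. Suc c \<le> x} else {x \<in> S. Suc c \<le> x})"
    by (auto simp: le_eq_less_or_eq)
  then show ?thesis using f by (simp add: cnt_def)
qed

lemma cnt_0: "cnt S 0 = card S" by (simp add: cnt_def)

lemma cnt_diff: "finite S \<Longrightarrow> Y \<subseteq> S \<Longrightarrow> cnt (S - Y) c = cnt S c - cnt Y c"
proof -
  assume f: "finite S" and Y: "Y \<subseteq> S"
  have "{x \<in> S - Y. c \<le> x} = {x \<in> S. c \<le> x} - {x \<in> Y. c \<le> x}" by auto
  moreover have "{x \<in> Y. c \<le> x} \<subseteq> {x \<in> S. c \<le> x}" using Y by auto
  ultimately show ?thesis using f by (simp add: cnt_def card_Diff_subset finite_subset)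
qed

lemma cnt_union: "finite A \<Longrightarrow> finite B \<Longrightarrow> A \<inter> B = {} \<Longrightarrow> cnt (A \<union> B) c = cnt A c + cnt B c"
proof -
  assume "finite A" "finite B" "A \<inter> B = {}"
  moreover have "{x \<in> A \<union> B. c \<le> x} = {x \<in> A. c \<le> x} \<union> {x \<in> B. c \<le> x}" by auto
  ultimately show ?thesis unfolding cnt_def by (simp add: card_Un_disjoint disjoint_iff)
qed

lemma cnt_mono: "finite T \<Longrightarrow> S \<subseteq> T \<Longrightarrow> cnt S c \<le> cnt T c"
  unfolding cnt_def by (rule card_mono) auto

lemma cnt_anti: "finite S \<Longrightarrow> c \<le> d \<Longrightarrow> cnt S d \<le> cnt S c"
  unfolding cnt_def by (rule card_mono) auto

lemma cnt_big: "S \<subseteq> {..n} \<Longrightarrow> n < c \<Longrightarrow> cnt S c = 0"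
  unfolding cnt_def by (auto simp: card_eq_0_iff)

lemma mv_sub: "mv U D n \<subseteq> U" by (auto simp: mv_def)
lemma mv_disj: "mv U D n \<inter> D = {}" by (auto simp: mv_def)
lemma mv_le: "mv U D n \<subseteq> {..n}" by (auto simp: mv_def)

lemma F2_eq:
  assumes U: "U \<subseteq> {..n}" and D: "D \<subseteq> {..n}"
  shows "int (cnt (mv U D n) c) - int (AA U D n c) = int (cnt U c) - int (cnt D c)"
proof (cases "c \<le> Suc n")
  case False
  then show ?thesis using U D mv_le[of U D n] by (simp add: cnt_big AA_big)
next
  case True
  then show ?thesis
  proof (induction c rule: inc_induct)
    case base
    then show ?case using U D mv_le[of U D n] by (simp add: cnt_big AA_big)
  next
    case (step c)
    have fU: "finite U" and fD: "finite D" and fM: "finite (mv U D n)"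
      using U D mv_le[of U D n] by (auto intro: finite_subset)
    have cn: "c \<le> n" using step by auto
    have mem: "c \<in> mv U D n \<longleftrightarrow> c \<in> U \<and> c \<notin> D \<and> AA U D n (Suc c) = 0"
      using cn by (simp add: mv_def)
    show ?case
      using step.IH cnt_Suc[OF fU, of c] cnt_Suc[OF fD, of c] cnt_Suc[OF fM, of c]
        AA_step[OF cn, of U D] mem
      by (cases "c \<in> U"; cases "c \<in> D"; cases "AA U D n (Suc c) = 0"; simp)
  qed
qed

lemma F2:
  assumes "U \<subseteq> {..n}" "D \<subseteq> {..n}"
  shows "cnt U c \<le> cnt D c + cnt (mv U D n) c"
  using F2_eq[OF assms, of c] by linarith

lemma F3:
  assumes U: "U \<subseteq> {..n}" and D: "D \<subseteq> {..n}"
    and h: "\<And>c'. c \<le> c' \<Longrightarrow> int (cnt U c') - int (cnt D c') \<le> int (g c')"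
    and g: "\<And>x y. c \<le> x \<Longrightarrow> x \<le> y \<Longrightarrow> g y \<le> g x"
  shows "cnt (mv U D n) c \<le> g c"
proof (cases "c \<le> Suc n")
  case False
  then show ?thesis using mv_le[of U D n] by (simp add: cnt_big)
next
  case True
  then show ?thesis using h g
  proof (induction c rule: inc_induct)
    case base
    then show ?case using mv_le[of U D n] by (simp add: cnt_big)
  next
    case (step c)
    have fM: "finite (mv U D n)"
      using mv_le[of U D n] by (auto intro: finite_subset)
    have cn: "c \<le> n" using step by auto
    have IH: "cnt (mv U D n) (Suc c) \<le> g (Suc c)"
      using step.IH step.prems by auto
    show ?case
    proof (cases "c \<in> mv U D n")
      case True
      then have "c \<in> U" "c \<notin> D" "AA U D n (Suc c) = 0" using cn by (auto simp: mv_def)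
      then have "AA U D n c = 0" using AA_step[OF cn, of U D] by simp
      then show ?thesis using F2_eq[OF U D, of c] step.prems(1)[of c] by simp
    next
      case False
      then show ?thesis using cnt_Suc[OF fM, of c] IH step.prems(2)[of c "Suc c"] by simp
    qed
  qed
qed



lemma MLset_sub: "E \<in> MLset L n \<Longrightarrow> E r \<subseteq> {1..n}"
proof -
  assume E: "E \<in> MLset L n"
  have a: "\<forall>r. 1 \<le> r \<and> r \<le> L \<longrightarrow> E r \<subseteq> {1..n}" and b: "\<forall>r. (r = 0 \<or> L < r) \<longrightarrow> E r = {}"
    using E unfolding MLset_def by blast+
  show ?thesis
  proof (cases "r = 0 \<or> L < r")
    case True then have "E r = {}" using b by blast
    then show ?thesis by simp
  next
    case False then show ?thesis using a by auto
  qed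
qed

lemma MLset_sub': "E \<in> MLset L n \<Longrightarrow> E r \<subseteq> {..n}"
  using MLset_sub[of E L n r] by auto

lemma MLset_fin: "E \<in> MLset L n \<Longrightarrow> finite (E r)"
  using MLset_sub[of E L n r] finite_subset[of "E r" "{1..n}"] by auto

lemma estar_MLset:
  assumes E: "E \<in> MLset L n" and i: "1 \<le> i" "i < L"
  shows "estar L n i E \<in> MLset L n"
proof -
  have s1: "E (Suc i) \<subseteq> {1..n}" "E i \<subseteq> {1..n}" using MLset_sub[OF E, of "Suc i"] MLset_sub[OF E, of i] by auto
  have m: "mv (E (Suc i)) (E i) n \<subseteq> E (Suc i)" by (rule mv_sub)
  show ?thesis unfolding estar_char[OF E i] MLset_def
  proof (intro CollectI conjI allI impI)
    fix r :: nat assume "1 \<le> r \<and> r \<le> L"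
    then show "(E(Suc i := E (Suc i) - mv (E (Suc i)) (E i) n, i := E i \<union> mv (E (Suc i)) (E i) n)) r \<subseteq> {1..n}"
      using s1 m MLset_sub[OF E, of r] by auto
  next
    fix r :: nat assume r: "r = 0 \<or> L < r"
    then have "r \<noteq> i" "r \<noteq> Suc i" using i by auto
    moreover have "E r = {}" using E r unfolding MLset_def by blast
    ultimately show "(E(Suc i := E (Suc i) - mv (E (Suc i)) (E i) n, i := E i \<union> mv (E (Suc i)) (E i) n)) r = {}"
      by simp
  qed
qed

lemma cnt_split: "finite E \<Longrightarrow> N \<subseteq> E \<Longrightarrow> cnt E c = cnt N c + cnt (E - N) c"
  using cnt_diff[of E N c] cnt_mono[of E N c] by simp

definition LInv :: "nat \<Rightarrow> nat \<Rightarrow> (nat \<Rightarrow> nat set) \<Rightarrow> nat \<Rightarrow> nat \<Rightarrow> (nat \<Rightarrow> nat set) \<Rightarrow> bool" where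
  "LInv L n N K l E \<longleftrightarrow> E \<in> MLset L n \<and> (\<forall>r. r \<le> l \<longrightarrow> E r = N r) \<and> (\<forall>r. K < r \<longrightarrow> E r = N r)
     \<and> N (Suc l) \<subseteq> E (Suc l)
     \<and> (\<forall>r. Suc (Suc l) \<le> r \<and> r \<le> K \<longrightarrow> domi (E r) (N (r - 1)))
     \<and> (\<forall>r. Suc (Suc (Suc l)) \<le> r \<and> r \<le> K \<longrightarrow> domi (E r) (E (r - 1)))
     \<and> (\<forall>r. Suc (Suc l) \<le> r \<and> r < K \<longrightarrow> card (N r) \<le> card (E r))"

lemma level_step:
  assumes N: "N \<in> MLset L n" and hN: "\<forall>r. 2 \<le> r \<and> r \<le> k \<longrightarrow> domi (N r) (N (r - 1))"
    and kL: "Suc k \<le> L" and bk: "Suc b \<le> k" and I: "LInv L n N (Suc k) (Suc b) E"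
  shows "LInv L n N (Suc k) b (estar L n (Suc b) E)"
proof -
  define i where "i = Suc b"
  have E: "E \<in> MLset L n" using I by (simp add: LInv_def)
  have i1: "1 \<le> i" and iL: "i < L" using bk kL by (auto simp: i_def)
  define Y where "Y = mv (E (Suc i)) (E i) n"
  have E': "estar L n i E = E(Suc i := E (Suc i) - Y, i := E i \<union> Y)"
    unfolding Y_def by (rule estar_char[OF E i1 iL])
  have Ei: "E i = N i" using I by (simp add: LInv_def i_def)
  have NE: "N (Suc i) \<subseteq> E (Suc i)" using I by (simp add: LInv_def i_def)
  have subU: "E (Suc i) \<subseteq> {..n}" and subD: "E i \<subseteq> {..n}" using MLset_sub'[OF E] by auto
  have fin: "\<And>r. finite (E r)" "\<And>r. finite (N r)" using MLset_fin[OF E] MLset_fin[OF N] by auto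
  have YU: "Y \<subseteq> E (Suc i)" unfolding Y_def by (rule mv_sub)
  have finY: "finite Y" using YU fin(1) finite_subset by blast
  have cE': "\<And>c. cnt (E (Suc i) - Y) c = cnt (E (Suc i)) c - cnt Y c"
    using cnt_diff[OF fin(1) YU] .
  have cYle: "\<And>c. cnt Y c \<le> cnt (E (Suc i)) c" using cnt_mono[OF fin(1) YU] .
  have F2': "\<And>c. cnt (E (Suc i)) c \<le> cnt (N i) c + cnt Y c"
    using F2[OF subU subD] Ei unfolding Y_def by simp
  define X where "X = E (Suc i) - N (Suc i)"
  have cX: "\<And>c. cnt (E (Suc i)) c = cnt (N (Suc i)) c + cnt X c"
    unfolding X_def using cnt_split[OF fin(1) NE] .
  have YX: "\<And>c. Suc i \<le> k \<Longrightarrow> cnt Y c \<le> cnt X c"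
  proof -
    fix c assume ik: "Suc i \<le> k"
    have dN: "domi (N (Suc i)) (N i)" using hN[rule_format, of "Suc i"] ik i1 by simp
    show "cnt Y c \<le> cnt X c" unfolding Y_def
    proof (rule F3[OF subU subD])
      fix c'
      have "cnt (N (Suc i)) c' \<le> cnt (N i) c'" using dN unfolding domi_def by blast
      then show "int (cnt (E (Suc i)) c') - int (cnt (E i) c') \<le> int (cnt X c')"
        using cX[of c'] Ei by simp
    next
      fix x y :: nat assume "c \<le> x" "x \<le> y"
      then show "cnt X y \<le> cnt X x" using fin(1) unfolding X_def by (intro cnt_anti) auto
    qed
  qed
  have "estar L n i E \<in> MLset L n" by (rule estar_MLset[OF E i1 iL])
  moreover have "\<forall>r. r \<le> b \<longrightarrow> estar L n i E r = N r" unfolding E' using I by (auto simp: LInv_def i_def)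
  moreover have "\<forall>r. Suc k < r \<longrightarrow> estar L n i E r = N r" unfolding E' using I bk by (auto simp: LInv_def i_def)
  moreover have "N (Suc b) \<subseteq> estar L n i E (Suc b)" unfolding E' using Ei by (auto simp: i_def)
  moreover have "\<forall>r. Suc (Suc b) \<le> r \<and> r \<le> Suc k \<longrightarrow> domi (estar L n i E r) (N (r - 1))"
  proof (intro allI impI)
    fix r assume r: "Suc (Suc b) \<le> r \<and> r \<le> Suc k"
    show "domi (estar L n i E r) (N (r - 1))"
    proof (cases "r = Suc i")
      case True
      then show ?thesis unfolding E' domi_def using cE' F2' by (simp add: i_def le_diff_conv)
    next
      case False
      then have "Suc (Suc (Suc b)) \<le> r" using r i_def by auto
      then show ?thesis unfolding E' using I r False by (auto simp: LInv_def i_def)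
    qed
  qed
  moreover have "\<forall>r. Suc (Suc (Suc b)) \<le> r \<and> r \<le> Suc k \<longrightarrow> domi (estar L n i E r) (estar L n i E (r - 1))"
  proof (intro allI impI)
    fix r assume r: "Suc (Suc (Suc b)) \<le> r \<and> r \<le> Suc k"
    show "domi (estar L n i E r) (estar L n i E (r - 1))"
    proof (cases "r = Suc (Suc i)")
      case True
      have ik: "Suc i \<le> k" using r True by auto
      have d3: "domi (E r) (N (Suc i))" using I r True unfolding LInv_def i_def by auto
      show ?thesis unfolding E' domi_def
      proof
        fix c
        have "cnt (E r) c \<le> cnt (N (Suc i)) c" using d3 unfolding domi_def by blast
        then show "cnt ((E(Suc i := E (Suc i) - Y, i := E i \<union> Y)) r) c
              \<le> cnt ((E(Suc i := E (Suc i) - Y, i := E i \<union> Y)) (r - 1)) c"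
          using True cE'[of c] cX[of c] YX[OF ik, of c] by simp
      qed
    next
      case False
      then have "Suc (Suc (Suc (Suc b))) \<le> r" using r i_def by auto
      then show ?thesis unfolding E' using I r False by (auto simp: LInv_def i_def)
    qed
  qed
  moreover have "\<forall>r. Suc (Suc b) \<le> r \<and> r < Suc k \<longrightarrow> card (N r) \<le> card (estar L n i E r)"
  proof (intro allI impI)
    fix r assume r: "Suc (Suc b) \<le> r \<and> r < Suc k"
    show "card (N r) \<le> card (estar L n i E r)"
    proof (cases "r = Suc i")
      case True
      have ik: "Suc i \<le> k" using r True by auto
      show ?thesis unfolding E' using True cE'[of 0] cX[of 0] YX[OF ik, of 0]
        by (simp add: cnt_0 i_def)
    next
      case False
      then have "Suc (Suc (Suc b)) \<le> r" using r i_def by auto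
      then show ?thesis unfolding E' using I r False by (auto simp: LInv_def i_def)
    qed
  qed
  ultimately show ?thesis unfolding LInv_def i_def by blast
qed

lemma level:
  assumes N: "N \<in> MLset L n" and hN: "\<forall>r. 2 \<le> r \<and> r \<le> k \<longrightarrow> domi (N r) (N (r - 1))"
    and kL: "Suc k \<le> L"
  shows "l \<le> k \<Longrightarrow> LInv L n N (Suc k) l E \<Longrightarrow> LInv L n N (Suc k) 0 (estar_seg L n l E)"
proof (induction l arbitrary: E)
  case 0 then show ?case by simp
next
  case (Suc b)
  show ?case using Suc.IH[OF _ level_step[OF N hN kL Suc.prems(1) Suc.prems(2)]] Suc.prems(1) by simp
qed

lemma LInv_start: "N \<in> MLset L n \<Longrightarrow> LInv L n N (Suc k) k N"
  unfolding LInv_def by auto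

definition SInv :: "nat \<Rightarrow> nat \<Rightarrow> (nat \<Rightarrow> nat set) \<Rightarrow> nat \<Rightarrow> (nat \<Rightarrow> nat set) \<Rightarrow> bool" where
  "SInv L n B k N \<longleftrightarrow> N \<in> MLset L n \<and> (\<forall>r. k < r \<longrightarrow> N r = B r)
      \<and> (\<forall>r. 2 \<le> r \<and> r \<le> k \<longrightarrow> domi (N r) (N (r - 1)))"

lemma stage_Suc_facts:
  assumes S: "SInv L n B k N" and kL: "Suc k \<le> L"
  shows "SInv L n B (Suc k) (estar_seg L n k N)
    \<and> (\<forall>r. 2 \<le> r \<and> r \<le> Suc k \<longrightarrow> card (estar_seg L n k N r) \<le> card (N (r - 1)))
    \<and> (\<forall>r. 1 \<le> r \<and> r < Suc k \<longrightarrow> card (N r) \<le> card (estar_seg L n k N r))"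
proof -
  have N: "N \<in> MLset L n" and hN: "\<forall>r. 2 \<le> r \<and> r \<le> k \<longrightarrow> domi (N r) (N (r - 1))"
    and NB: "\<forall>r. k < r \<longrightarrow> N r = B r"
    using S by (auto simp: SInv_def)
  define E where "E = estar_seg L n k N"
  have I: "LInv L n N (Suc k) 0 E" unfolding E_def by (rule level[OF N hN kL le_refl LInv_start[OF N]])
  have E: "E \<in> MLset L n" using I by (simp add: LInv_def)
  have fin: "\<And>r. finite (E r)" "\<And>r. finite (N r)" using MLset_fin[OF E] MLset_fin[OF N] by auto
  have N1: "N 1 \<subseteq> E 1" using I by (simp add: LInv_def)
  have c1: "\<And>c. cnt (N 1) c \<le> cnt (E 1) c" using cnt_mono[OF fin(1) N1] .
  have dom: "\<forall>r. 2 \<le> r \<and> r \<le> Suc k \<longrightarrow> domi (E r) (E (r - 1))"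
  proof (intro allI impI)
    fix r :: nat assume r: "2 \<le> r \<and> r \<le> Suc k"
    show "domi (E r) (E (r - 1))"
    proof (cases "r = 2")
      case True
      have A: "\<forall>r. Suc (Suc 0) \<le> r \<and> r \<le> Suc k \<longrightarrow> domi (E r) (N (r - 1))" using I by (simp add: LInv_def)
      have "domi (E (Suc (Suc 0))) (N (Suc 0))" using spec[OF A, of "Suc (Suc 0)"] r True by simp
      then have "domi (E 2) (N 1)" by (simp add: numeral_2_eq_2)
      then have "\<forall>c. cnt (E 2) c \<le> cnt (E 1) c" unfolding domi_def using c1 le_trans by blast
      then show ?thesis using True unfolding domi_def by simp
    next
      case False
      then show ?thesis using I r by (auto simp: LInv_def)
    qed
  qed
  have b: "\<forall>r. 2 \<le> r \<and> r \<le> Suc k \<longrightarrow> card (E r) \<le> card (N (r - 1))"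
    using I unfolding LInv_def domi_def by (auto simp: cnt_0[symmetric])
  have c: "\<forall>r. 1 \<le> r \<and> r < Suc k \<longrightarrow> card (N r) \<le> card (E r)"
  proof (intro allI impI)
    fix r :: nat assume r: "1 \<le> r \<and> r < Suc k"
    show "card (N r) \<le> card (E r)"
    proof (cases "r = 1")
      case True then show ?thesis using c1[of 0] by (simp add: cnt_0)
    next
      case False then show ?thesis using I r by (auto simp: LInv_def)
    qed
  qed
  have "SInv L n B (Suc k) E" using E dom I NB unfolding SInv_def LInv_def by auto
  then show ?thesis using b c unfolding E_def by blast
qed

lemma stage_SInv: "B \<in> MLset L n \<Longrightarrow> k \<le> L \<Longrightarrow> SInv L n B k (stage L n k B)"
proof (induction k)
  case 0 then show ?case by (simp add: SInv_def)
next
  case (Suc k)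
  then show ?case using stage_Suc_facts[OF Suc.IH] by simp
qed



lemma cnt_remove: "finite S \<Longrightarrow> cnt (S - {s}) c0 = cnt S c0 - of_bool (s \<in> S \<and> c0 \<le> s)"
proof -
  assume f: "finite S"
  have "{x \<in> S - {s}. c0 \<le> x} = {x \<in> S. c0 \<le> x} - {s}" by auto
  then show ?thesis using f by (auto simp: cnt_def card_Diff_singleton_if)
qed

lemma cnt_pos: "finite P \<Longrightarrow> c \<in> P \<Longrightarrow> 1 \<le> cnt P c"
proof -
  assume f: "finite P" and c: "c \<in> P"
  have "{x \<in> P. c \<le> x} \<noteq> {}" using c by auto
  moreover have "finite {x \<in> P. c \<le> x}" using f by auto
  ultimately show ?thesis unfolding cnt_def by (simp add: Suc_leI card_gt_0_iff)
qed

lemma domi_step: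
  assumes fP: "finite P" and fF: "finite F" and cP: "c \<in> P" and sF: "s \<in> F" and cs: "c \<le> s"
    and smin: "\<forall>x\<in>F. c \<le> x \<longrightarrow> s \<le> x" and d: "domi P F"
  shows "domi (P - {c}) (F - {s})"
  unfolding domi_def
proof
  fix c0
  have d0: "cnt P c0 \<le> cnt F c0" using d by (simp add: domi_def)
  have eP: "cnt (P - {c}) c0 = cnt P c0 - of_bool (c0 \<le> c)" using cnt_remove[OF fP] cP by simp
  have eF: "cnt (F - {s}) c0 = cnt F c0 - of_bool (c0 \<le> s)" using cnt_remove[OF fF] sF by simp
  show "cnt (P - {c}) c0 \<le> cnt (F - {s}) c0"
  proof (cases "c0 \<le> c")
    case True
    then show ?thesis using eP eF d0 cs by simp
  next
    case False
    show ?thesis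
    proof (cases "c0 \<le> s")
      case False
      then show ?thesis using eP eF d0 \<open>\<not> c0 \<le> c\<close> by simp
    next
      case True
      have "\<forall>x\<in>F. c \<le> x \<longleftrightarrow> c0 \<le> x"
      proof
        fix x assume xF: "x \<in> F"
        show "c \<le> x \<longleftrightarrow> c0 \<le> x"
        proof
          assume "c \<le> x" then have "s \<le> x" using smin xF by blast
          then show "c0 \<le> x" using True by simp
        next
          assume "c0 \<le> x" then show "c \<le> x" using \<open>\<not> c0 \<le> c\<close> by simp
        qed
      qed
      then have "{x \<in> F. c \<le> x} = {x \<in> F. c0 \<le> x}" by blast
      then have eq: "cnt F c = cnt F c0" by (simp add: cnt_def)
      have "{x \<in> P. c0 \<le> x} \<subseteq> {x \<in> P. c \<le> x} - {c}" using \<open>\<not> c0 \<le> c\<close> by auto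
      then have "cnt P c0 \<le> card ({x \<in> P. c \<le> x} - {c})" unfolding cnt_def
        by (intro card_mono) (use fP in auto)
      also have "\<dots> = cnt P c - 1" unfolding cnt_def using cP fP by (simp add: card_Diff_singleton)
      finally have "cnt P c0 \<le> cnt P c - 1" .
      moreover have "cnt P c \<le> cnt F c" using d by (simp add: domi_def)
      ultimately show ?thesis using eP eF eq True \<open>\<not> c0 \<le> c\<close> by simp
    qed
  qed
qed

lemma pair_seq_snd:
  "finite S \<Longrightarrow> distinct (map fst ps) \<Longrightarrow> domi (set (map fst ps)) {x \<in> S. lab x = None}
   \<Longrightarrow> snd (pair_seq r S ps lab acc) = acc"
proof (induction ps arbitrary: lab)
  case Nil then show ?case by simp
next
  case (Cons p ps)
  obtain c l where p: "p = (c, l)" by (cases p)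
  define F where "F = {x \<in> S. lab x = None}"
  define P where "P = set (map fst (p # ps))"
  have fF: "finite F" using Cons.prems(1) by (simp add: F_def)
  have fP: "finite P" by (simp add: P_def)
  have cP: "c \<in> P" by (simp add: P_def p)
  have dPF: "domi P F" using Cons.prems(3) by (simp add: P_def F_def)
  have "1 \<le> cnt F c" using cnt_pos[OF fP cP] dPF unfolding domi_def by (meson le_trans)
  then have ne: "{x \<in> F. c \<le> x} \<noteq> {}" unfolding cnt_def by (metis card.empty not_one_le_zero)
  then have ex: "\<exists>x\<in>F. c \<le> x" by auto
  define s where "s = Min {x \<in> F. c \<le> x}"
  have fin2: "finite {x \<in> F. c \<le> x}" using fF by auto
  have sin: "s \<in> {x \<in> F. c \<le> x}" unfolding s_def using Min_in[OF fin2 ne] .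
  then have sF: "s \<in> F" and cs: "c \<le> s" by auto
  have smin: "\<forall>x\<in>F. c \<le> x \<longrightarrow> s \<le> x" unfolding s_def using fin2 by auto
  have cyc: "cyc_next c F = s" unfolding cyc_next_def s_def using ex by simp
  have newF: "{x \<in> S. (lab(s := Some l)) x = None} = F - {s}" by (auto simp: F_def)
  have dist: "c \<notin> set (map fst ps)" "distinct (map fst ps)" using Cons.prems(2) p by auto
  have Pe: "set (map fst ps) = P - {c}" using dist by (auto simp: P_def p)
  have "domi (set (map fst ps)) {x \<in> S. (lab(s := Some l)) x = None}"
    unfolding newF Pe by (rule domi_step[OF fP fF cP sF cs smin dPF])
  then have "snd (pair_seq r S ps (lab(s := Some l)) acc) = acc"
    using Cons.IH[OF Cons.prems(1) dist(2)] by blast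
  then show ?case using cyc cs by (simp add: p Let_def F_def[symmetric])
qed

lemma pair_seq_fst:
  "fst (pair_seq r S ps lab acc) c = Some l \<Longrightarrow> lab c = Some l \<or> l \<in> snd ` set ps"
proof (induction ps arbitrary: lab acc)
  case Nil then show ?case by simp
next
  case (Cons p ps)
  obtain c0 l0 where p: "p = (c0, l0)" by (cases p)
  define c' where "c' = cyc_next c0 {x \<in> S. lab x = None}"
  define acc' where "acc' = (if c' < c0 then acc + (l0 + 1 - r) else acc)"
  have "fst (pair_seq r S (p # ps) lab acc) = fst (pair_seq r S ps (lab(c' := Some l0)) acc')"
    by (simp add: p Let_def c'_def acc'_def)
  then have h: "fst (pair_seq r S ps (lab(c' := Some l0)) acc') c = Some l"
    using Cons.prems by (simp only:)
  have "(lab(c' := Some l0)) c = Some l \<or> l \<in> snd ` set ps" by (rule Cons.IH[OF h])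
  then show ?case by (cases "c = c'") (auto simp: p)
qed

lemma concat_set_fun:
  "set (concat (map (\<lambda>l. sorted_list_of_set {c \<in> M. f c = Some l}) ls)) = {c \<in> M. \<exists>l\<in>set ls. f c = Some l}"
  if "finite M" using that by (induction ls) auto

lemma concat_distinct_fun:
  "distinct ls \<Longrightarrow> finite M \<Longrightarrow> distinct (concat (map (\<lambda>l. sorted_list_of_set {c \<in> M. f c = Some l}) ls))"
proof (induction ls)
  case Nil then show ?case by simp
next
  case (Cons l ls)
  then show ?case by (auto simp: concat_set_fun)
qed

lemma maj_aux_zero:
  shows "(\<forall>r. finite (M r)) \<Longrightarrow> (\<forall>r. 2 \<le> r \<longrightarrow> domi (M r) (M (r - 1))) \<Longrightarrow> r \<le> tp \<Longrightarrow> (\<forall>c l. lab c = Some l \<longrightarrow> r < l \<and> l \<le> tp) \<Longrightarrow> maj_aux tp M r lab = 0"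
proof (induction tp M r lab rule: maj_aux.induct)
  case (1 tp M lab) then show ?case by simp
next
  case (2 tp M lab) then show ?case by simp
next
  case (3 tp M k lab)
  note fin = "3.prems"(1)
  note dm = "3.prems"(2)
  define r where "r = Suc (Suc k)"
  define labr where "labr = (\<lambda>c. case lab c of Some l \<Rightarrow> Some l
                                  | None \<Rightarrow> (if c \<in> M r then Some r else None))"
  define seq where "seq = concat (map (\<lambda>l. map (\<lambda>c. (c, l))
                                    (sorted_list_of_set {c \<in> M r. labr c = Some l}))
                           (rev [r..<tp + 1]))"
  define res where "res = pair_seq r (M (Suc k)) seq (\<lambda>_. None) 0"
  have e: "maj_aux tp M (Suc (Suc k)) lab = snd res + maj_aux tp M (Suc k) (fst res)"
    by (simp only: maj_aux.simps(3) Let_def r_def labr_def seq_def res_def)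
  have ms: "map fst seq = concat (map (\<lambda>l. sorted_list_of_set {c \<in> M r. labr c = Some l}) (rev [r..<tp + 1]))"
    by (simp add: seq_def map_concat comp_def)
  have sset: "set (map fst seq) = M r"
  proof -
    have "set (map fst seq) = {c \<in> M r. \<exists>l\<in>set (rev [r..<tp + 1]). labr c = Some l}"
      unfolding ms by (rule concat_set_fun) (use fin in auto)
    also have "\<dots> = M r"
    proof (rule set_eqI, rule iffI)
      fix c assume "c \<in> {c \<in> M r. \<exists>l\<in>set (rev [r..<tp + 1]). labr c = Some l}"
      then show "c \<in> M r" by simp
    next
      fix c assume c: "c \<in> M r"
      show "c \<in> {c \<in> M r. \<exists>l\<in>set (rev [r..<tp + 1]). labr c = Some l}"
      proof (cases "lab c")
        case None
        then show ?thesis using c "3.prems"(3) by (auto simp: labr_def r_def)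
      next
        case (Some l)
        moreover have "Suc (Suc k) < l \<and> l \<le> tp" using "3.prems"(4) Some by blast
        ultimately show ?thesis using c by (auto simp: labr_def r_def)
      qed
    qed
    finally show ?thesis .
  qed
  have sdist: "distinct (map fst seq)"
    unfolding ms by (rule concat_distinct_fun) (use fin in auto)
  have d: "domi (M r) (M (Suc k))" using dm r_def by (metis diff_Suc_1 le_add1 add_2_eq_Suc)
  have s0: "snd res = 0" unfolding res_def
    by (rule pair_seq_snd) (use fin sdist sset d in auto)
  have labs: "\<And>l. l \<in> snd ` set seq \<Longrightarrow> r \<le> l \<and> l \<le> tp"
    by (auto simp: seq_def)
  have inv: "\<forall>c l. fst res c = Some l \<longrightarrow> Suc k < l \<and> l \<le> tp"
  proof (intro allI impI)
    fix c l assume "fst res c = Some l"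
    then have "l \<in> snd ` set seq" using pair_seq_fst unfolding res_def by fastforce
    then show "Suc k < l \<and> l \<le> tp" using labs r_def by fastforce
  qed
  have "maj_aux tp M (Suc k) (fst res) = 0"
    using "3.IH"[OF r_def labr_def seq_def res_def fin dm] "3.prems"(3) inv by simp
  then show ?case using e s0 by simp
qed



lemma estar_sum:
  assumes E: "E \<in> MLset L n" and i: "1 \<le> i" "i < L" and m: "Suc i \<le> m"
  shows "(\<Sum>r\<in>{1..m}. card (estar L n i E r)) = (\<Sum>r\<in>{1..m}. card (E r))"
proof -
  define Y where "Y = mv (E (Suc i)) (E i) n"
  define E' where "E' = estar L n i E"
  have e: "E' = E(Suc i := E (Suc i) - Y, i := E i \<union> Y)"
    unfolding E'_def Y_def by (rule estar_char[OF E i])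
  have YU: "Y \<subseteq> E (Suc i)" and YD: "Y \<inter> E i = {}" unfolding Y_def by (rule mv_sub, rule mv_disj)
  have fin: "\<And>r. finite (E r)" using MLset_fin[OF E] .
  have finY: "finite Y" using YU fin finite_subset by blast
  have c1: "card (E' (Suc i)) = card (E (Suc i)) - card Y" using e YU fin
    by (simp add: card_Diff_subset finY)
  have c2: "card (E' i) = card (E i) + card Y" using e YD fin[of i] finY
    by (simp add: card_Un_disjoint Int_commute)
  have cY: "card Y \<le> card (E (Suc i))" using card_mono[OF fin YU] .
  have same: "\<And>r. r \<noteq> i \<Longrightarrow> r \<noteq> Suc i \<Longrightarrow> E' r = E r" using e by simp
  have A: "\<And>g :: nat \<Rightarrow> nat. (\<Sum>r\<in>{1..m}. g r) = g i + g (Suc i) + (\<Sum>r\<in>{1..m} - {i} - {Suc i}. g r)"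
  proof -
    fix g :: "nat \<Rightarrow> nat"
    have "(\<Sum>r\<in>{1..m}. g r) = g i + (\<Sum>r\<in>{1..m} - {i}. g r)"
      using i m by (intro sum.remove) auto
    also have "(\<Sum>r\<in>{1..m} - {i}. g r) = g (Suc i) + (\<Sum>r\<in>{1..m} - {i} - {Suc i}. g r)"
      using i m by (intro sum.remove) auto
    finally show "(\<Sum>r\<in>{1..m}. g r) = g i + g (Suc i) + (\<Sum>r\<in>{1..m} - {i} - {Suc i}. g r)" by simp
  qed
  have "(\<Sum>r\<in>{1..m} - {i} - {Suc i}. card (E' r)) = (\<Sum>r\<in>{1..m} - {i} - {Suc i}. card (E r))"
    by (intro sum.cong) (auto simp: same)
  then show ?thesis unfolding E'_def[symmetric] using A[of "\<lambda>r. card (E' r)"] A[of "\<lambda>r. card (E r)"] c1 c2 cY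
    by simp
qed

lemma estar_seg_sum:
  "E \<in> MLset L n \<Longrightarrow> b < L \<Longrightarrow> Suc b \<le> m \<Longrightarrow>
   estar_seg L n b E \<in> MLset L n \<and> (\<Sum>r\<in>{1..m}. card (estar_seg L n b E r)) = (\<Sum>r\<in>{1..m}. card (E r))"
proof (induction b arbitrary: E)
  case 0 then show ?case by simp
next
  case (Suc b)
  have E1: "estar L n (Suc b) E \<in> MLset L n" by (rule estar_MLset) (use Suc.prems in auto)
  have s1: "(\<Sum>r\<in>{1..m}. card (estar L n (Suc b) E r)) = (\<Sum>r\<in>{1..m}. card (E r))"
    by (rule estar_sum) (use Suc.prems in auto)
  show ?case using Suc.IH[OF E1] Suc.prems s1 by simp
qed

lemma stage_sum:
  "B \<in> MLset L n \<Longrightarrow> k \<le> L \<Longrightarrow> k \<le> m \<Longrightarrow>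
   (\<Sum>r\<in>{1..m}. card (stage L n k B r)) = (\<Sum>r\<in>{1..m}. card (B r))"
proof (induction k)
  case 0 then show ?case by simp
next
  case (Suc k)
  have N: "stage L n k B \<in> MLset L n" using stage_SInv[of B L n k] Suc.prems by (simp add: SInv_def)
  show ?case using estar_seg_sum[OF N, of k m] Suc by simp
qed

definition blk :: "(nat \<Rightarrow> nat) \<Rightarrow> nat \<Rightarrow> nat list" where
  "blk m L = concat (map (\<lambda>i. replicate (m i) i) [1..<L + 1])"

lemma blk_0[simp]: "blk m 0 = []" by (simp add: blk_def)
lemma blk_Suc: "blk m (Suc L) = blk m L @ replicate (m (Suc L)) (Suc L)"
  by (simp add: blk_def)

lemma set_blk: "set (blk m L) \<subseteq> {1..L}"
  by (induction L) (auto simp: blk_Suc)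

lemma sorted_blk: "sorted (blk m L)"
proof (induction L)
  case 0 then show ?case by simp
next
  case (Suc L)
  have "\<forall>x\<in>set (blk m L). \<forall>y\<in>set (replicate (m (Suc L)) (Suc L)). x \<le> y"
    using set_blk[of m L] by auto
  then show ?case using Suc by (simp add: blk_Suc sorted_append)
qed

lemma filter_blk: "length (filter P (blk m L)) = (\<Sum>i=1..L. if P i then m i else 0)"
  by (induction L) (auto simp: blk_Suc)

lemma length_blk: "length (blk m L) = (\<Sum>i=1..L. m i)"
  using filter_blk[of "\<lambda>_. True" m L] by simp

lemma count_replicate: "count_list (replicate k a) x = (if a = x then k else 0)"
  by (induction k) auto

lemma count_blk: "count_list (blk m L) x = (if 1 \<le> x \<and> x \<le> L then m x else 0)"
  by (induction L) (auto simp: blk_Suc count_replicate)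

lemma sum_if_le: "(\<Sum>i=1..(L::nat). if P i then f i else (0::nat)) = (\<Sum>i\<in>{x\<in>{1..L}. P x}. f i)"
  by (rule sum.inter_filter[symmetric]) simp

lemma col_strict:
  fixes xs ys :: "nat list"
  assumes sx: "sorted xs" and sy: "sorted ys"
    and h: "\<forall>v. length (filter (\<lambda>x. x \<le> v) ys) \<le> length (filter (\<lambda>x. x < v) xs)"
    and c: "c < length ys"
  shows "xs ! c < ys ! c"
proof (rule ccontr)
  assume nc: "\<not> xs ! c < ys ! c"
  define v where "v = ys ! c"
  have "\<forall>x\<in>set (take (Suc c) ys). x \<le> v"
  proof
    fix x assume "x \<in> set (take (Suc c) ys)"
    then obtain j where j: "j < length (take (Suc c) ys)" "x = take (Suc c) ys ! j"
      by (auto simp: in_set_conv_nth)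
    then have "j \<le> c" "x = ys ! j" by auto
    then show "x \<le> v" unfolding v_def using sorted_nth_mono[OF sy] c by auto
  qed
  then have "filter (\<lambda>x. x \<le> v) (take (Suc c) ys) = take (Suc c) ys" by (simp add: filter_id_conv)
  then have l1: "length (filter (\<lambda>x. x \<le> v) (take (Suc c) ys)) = Suc c" using c by simp
  have "length (filter (\<lambda>x. x \<le> v) ys) = length (filter (\<lambda>x. x \<le> v) (take (Suc c) ys))
        + length (filter (\<lambda>x. x \<le> v) (drop (Suc c) ys))"
    by (subst append_take_drop_id[symmetric, of ys "Suc c"], subst filter_append) simp
  then have g1: "Suc c \<le> length (filter (\<lambda>x. x \<le> v) ys)" using l1 by simp
  have g2: "length (filter (\<lambda>x. x < v) xs) \<le> c"
  proof (cases "c < length xs")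
    case False
    then show ?thesis using length_filter_le[of "\<lambda>x. x < v" xs] by linarith
  next
    case True
    have "\<forall>x\<in>set (drop c xs). \<not> x < v"
    proof
      fix x assume "x \<in> set (drop c xs)"
      then obtain j where j: "j < length (drop c xs)" "x = drop c xs ! j"
        by (auto simp: in_set_conv_nth)
      then have "x = xs ! (c + j)" "c + j < length xs" by auto
      then have "xs ! c \<le> x" using sorted_nth_mono[OF sx, of c "c + j"] by simp
      then show "\<not> x < v" using nc v_def by simp
    qed
    then have "filter (\<lambda>x. x < v) (drop c xs) = []" by (simp add: filter_empty_conv)
    moreover have "length (filter (\<lambda>x. x < v) xs) = length (filter (\<lambda>x. x < v) (take c xs))
        + length (filter (\<lambda>x. x < v) (drop c xs))"
      by (subst append_take_drop_id[symmetric, of xs c], subst filter_append) simp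
    ultimately show ?thesis using length_filter_le[of "\<lambda>x. x < v" "take c xs"] True by simp
  qed
  show False using h g1 g2 by (metis le_trans not_less_eq_eq)
qed



lemma factB:
  assumes B: "B \<in> MLset L n" and k: "Suc k \<le> L" and r: "2 \<le> r" "r \<le> Suc k"
  shows "card (stage L n (Suc k) B r) \<le> card (stage L n k B (r - 1))"
  using stage_Suc_facts[OF stage_SInv[OF B, of k] k] k r by simp

lemma factC:
  assumes B: "B \<in> MLset L n" and k: "Suc k \<le> L" and r: "1 \<le> r" "r < Suc k"
  shows "card (stage L n k B r) \<le> card (stage L n (Suc k) B r)"
  using stage_Suc_facts[OF stage_SInv[OF B, of k] k] k r by simp

lemma mult_nonneg:
  assumes B: "B \<in> MLset L n"
  shows "0 \<le> rhoQ_mult L n B r i"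
proof (cases "1 \<le> r \<and> r < i \<and> i \<le> L")
  case True
  then obtain k where k: "i = Suc k" by (cases i) auto
  have "card (stage L n k B r) \<le> card (stage L n (Suc k) B r)"
    using factC[OF B, of k r] True k by simp
  then show ?thesis using True k by (simp add: rhoQ_mult_def)
next
  case False
  then show ?thesis by (auto simp: rhoQ_mult_def)
qed

lemma tele:
  assumes B: "B \<in> MLset L n" and r: "1 \<le> r"
  shows "V \<le> L \<Longrightarrow> (\<Sum>i=1..V. nat (rhoQ_mult L n B r i)) = (if r \<le> V then card (stage L n V B r) else 0)"
proof (induction V)
  case 0 then show ?case using r by simp
next
  case (Suc V)
  have IH: "(\<Sum>i=1..V. nat (rhoQ_mult L n B r i)) = (if r \<le> V then card (stage L n V B r) else 0)"
    using Suc by simp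
  have s: "(\<Sum>i=1..Suc V. nat (rhoQ_mult L n B r i)) = (\<Sum>i=1..V. nat (rhoQ_mult L n B r i)) + nat (rhoQ_mult L n B r (Suc V))"
    by (simp add: sum.cl_ivl_Suc)
  consider "r \<le> V" | "r = Suc V" | "Suc V < r" by linarith
  then show ?case
  proof cases
    case 1
    have le: "card (stage L n V B r) \<le> card (stage L n (Suc V) B r)"
      using factC[OF B, of V r] 1 r Suc.prems by simp
    have "rhoQ_mult L n B r (Suc V) = int (card (stage L n (Suc V) B r)) - int (card (stage L n V B r))"
      using 1 r Suc.prems by (simp add: rhoQ_mult_def)
    then have "nat (rhoQ_mult L n B r (Suc V)) = card (stage L n (Suc V) B r) - card (stage L n V B r)"
      using le by simp
    then show ?thesis using s IH 1 le by simp
  next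
    case 2
    have "rhoQ_mult L n B r (Suc V) = int (card (stage L n (Suc V) B r))"
      using 2 r Suc.prems by (simp add: rhoQ_mult_def)
    then show ?thesis using s IH 2 by simp
  next
    case 3
    have "rhoQ_mult L n B r (Suc V) = 0" using 3 by (simp add: rhoQ_mult_def)
    then show ?thesis using s IH 3 by simp
  qed
qed

lemma rhoQ_blk: "rhoQ L n B r = (if 1 \<le> r \<and> r \<le> L then blk (\<lambda>i. nat (rhoQ_mult L n B r i)) L else [])"
  by (simp add: rhoQ_def blk_def)

lemma filt_blk_le:
  assumes B: "B \<in> MLset L n" and r: "1 \<le> r" "r \<le> L"
  shows "length (filter (\<lambda>x. x \<le> v) (rhoQ L n B r)) =
     (if r \<le> min v L then card (stage L n (min v L) B r) else 0)"
proof -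
  have e: "{x \<in> {1..L}. x \<le> v} = {1..min v L}" by auto
  have "length (filter (\<lambda>x. x \<le> v) (rhoQ L n B r)) = (\<Sum>i=1..L. if i \<le> v then nat (rhoQ_mult L n B r i) else 0)"
    using r by (simp add: rhoQ_blk filter_blk)
  also have "\<dots> = (\<Sum>i\<in>{x \<in> {1..L}. x \<le> v}. nat (rhoQ_mult L n B r i))" by (rule sum_if_le)
  also have "\<dots> = (\<Sum>i=1..min v L. nat (rhoQ_mult L n B r i))" unfolding e ..
  also have "\<dots> = (if r \<le> min v L then card (stage L n (min v L) B r) else 0)"
    by (rule tele[OF B r(1)]) simp
  finally show ?thesis .
qed

lemma filt_blk_lt:
  assumes B: "B \<in> MLset L n" and r: "1 \<le> r" "r \<le> L"
  shows "length (filter (\<lambda>x. x < v) (rhoQ L n B r)) =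
     (if r \<le> min (v - 1) L then card (stage L n (min (v - 1) L) B r) else 0)"
proof -
  have e: "{x \<in> {1..L}. x < v} = {1..min (v - 1) L}" by auto
  have "length (filter (\<lambda>x. x < v) (rhoQ L n B r)) = (\<Sum>i=1..L. if i < v then nat (rhoQ_mult L n B r i) else 0)"
    using r by (simp add: rhoQ_blk filter_blk)
  also have "\<dots> = (\<Sum>i\<in>{x \<in> {1..L}. x < v}. nat (rhoQ_mult L n B r i))" by (rule sum_if_le)
  also have "\<dots> = (\<Sum>i=1..min (v - 1) L. nat (rhoQ_mult L n B r i))" unfolding e ..
  also have "\<dots> = (if r \<le> min (v - 1) L then card (stage L n (min (v - 1) L) B r) else 0)"
    by (rule tele[OF B r(1)]) simp
  finally show ?thesis .
qed



lemma content_sum: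
  assumes B: "B \<in> MLset L n" and i: "1 \<le> i" "i \<le> L"
  shows "(\<Sum>r\<in>{1..L}. nat (rhoQ_mult L n B r i)) = card (B i)"
proof -
  obtain j where j: "i = Suc j" using i by (cases i) auto
  have nn: "\<And>r. int (nat (rhoQ_mult L n B r i)) = rhoQ_mult L n B r i" using mult_nonneg[OF B] by simp
  have "int (\<Sum>r\<in>{1..L}. nat (rhoQ_mult L n B r i)) = (\<Sum>r\<in>{1..L}. int (nat (rhoQ_mult L n B r i)))"
    by (simp only: of_nat_sum)
  also have "\<dots> = (\<Sum>r\<in>{1..L}. rhoQ_mult L n B r i)"
    by (simp only: nn)
  also have "\<dots> = (\<Sum>r\<in>{1..i}. rhoQ_mult L n B r i)"
    by (rule sum.mono_neutral_right) (use i in \<open>auto simp: rhoQ_mult_def\<close>)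
  also have "\<dots> = (\<Sum>r\<in>{1..i}. int (card (stage L n i B r)) - (if r < i then int (card (stage L n j B r)) else 0))"
    by (intro sum.cong) (use i j in \<open>auto simp: rhoQ_mult_def\<close>)
  also have "\<dots> = (\<Sum>r\<in>{1..i}. int (card (stage L n i B r))) - (\<Sum>r\<in>{1..i}. (if r < i then int (card (stage L n j B r)) else 0))"
    by (simp add: sum_subtractf)
  also have "(\<Sum>r\<in>{1..i}. (if r < i then int (card (stage L n j B r)) else 0)) = (\<Sum>r\<in>{1..j}. int (card (stage L n j B r)))"
    using j by (simp add: sum.cl_ivl_Suc)
  also have "(\<Sum>r\<in>{1..i}. int (card (stage L n i B r))) = int (\<Sum>r\<in>{1..i}. card (B r))"
    using stage_sum[OF B i(2) le_refl] by (simp flip: of_nat_sum)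
  also have "(\<Sum>r\<in>{1..j}. int (card (stage L n j B r))) = int (\<Sum>r\<in>{1..j}. card (B r))"
    using stage_sum[OF B _ le_refl, of j] i j by (simp flip: of_nat_sum)
  also have "(\<Sum>r\<in>{1..i}. card (B r)) = (\<Sum>r\<in>{1..j}. card (B r)) + card (B i)"
    using j by (simp add: sum.cl_ivl_Suc)
  finally have "int (\<Sum>r\<in>{1..L}. nat (rhoQ_mult L n B r i)) = int (card (B i))" by simp
  then show ?thesis by (simp only: of_nat_eq_iff)
qed

theorem proposition4p8:
  fixes L n :: nat and B :: "nat \<Rightarrow> nat set"
  assumes "0 < L" and "0 < n" and "B \<in> MLset L n"
  shows "\<exists>mu. is_partition mu \<and> length mu \<le> n \<and> rhoN L n B \<in> MLQ0 mu n
           \<and> (\<forall>r i. 0 \<le> rhoQ_mult L n B r i)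
           \<and> is_ssyt (rhoQ L n B) (conj mu)
           \<and> (\<forall>i. 1 \<le> i \<longrightarrow> (\<Sum>r\<in>{1..L}. count_list (rhoQ L n B r) i) = card (B i))"
proof -
  note Bm = assms(3)
  define M where "M = rhoN L n B"
  have MS: "SInv L n B L M" unfolding M_def rhoN_def by (rule stage_SInv[OF Bm le_refl])
  have Mm: "M \<in> MLset L n" using MS by (simp add: SInv_def)
  have Mst: "M = stage L n L B" by (simp add: M_def rhoN_def)
  define s where "s j = card (M j)" for j
  have fin: "\<forall>r. finite (M r)" using MLset_fin[OF Mm] by blast
  have Mbig: "\<And>r. L < r \<Longrightarrow> M r = {}" using Mm unfolding MLset_def by blast
  have Mdom: "\<forall>r. 2 \<le> r \<longrightarrow> domi (M r) (M (r - 1))"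
  proof (intro allI impI)
    fix r :: nat assume r: "2 \<le> r"
    show "domi (M r) (M (r - 1))"
    proof (cases "r \<le> L")
      case True then show ?thesis using MS r by (simp add: SInv_def)
    next
      case False then show ?thesis using Mbig[of r] by (simp add: domi_def cnt_def)
    qed
  qed
  have szero: "\<And>j. L < j \<Longrightarrow> s j = 0" using Mbig by (simp add: s_def)
  have sdec: "\<And>j. 1 \<le> j \<Longrightarrow> s (Suc j) \<le> s j"
  proof -
    fix j :: nat assume j: "1 \<le> j"
    have "domi (M (Suc j)) (M j)" using Mdom[rule_format, of "Suc j"] j by simp
    then have "cnt (M (Suc j)) 0 \<le> cnt (M j) 0" unfolding domi_def by blast
    then show "s (Suc j) \<le> s j" by (simp add: s_def cnt_0)
  qed
  have santi: "\<And>j j'. 1 \<le> j \<Longrightarrow> j \<le> j' \<Longrightarrow> s j' \<le> s j"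
  proof -
    fix j j' :: nat assume j: "1 \<le> j" and jj: "j \<le> j'"
    show "s j' \<le> s j" using jj
    proof (induction j' rule: dec_induct)
      case base then show ?case by simp
    next
      case (step m) then show ?case using sdec[of m] j by simp
    qed
  qed
  have s1n: "s 1 \<le> n"
  proof -
    have "M 1 \<subseteq> {1..n}" by (rule MLset_sub[OF Mm])
    then show ?thesis unfolding s_def using card_mono[of "{1..n}" "M 1"] by simp
  qed
  define mu where "mu = map (\<lambda>i. card {j. 1 \<le> j \<and> j \<le> L \<and> Suc i \<le> s j}) [0..<s 1]"
  have len: "length mu = s 1" by (simp add: mu_def)
  have nth: "\<And>i. i < s 1 \<Longrightarrow> mu ! i = card {j. 1 \<le> j \<and> j \<le> L \<and> Suc i \<le> s j}"
    by (simp add: mu_def)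
  have key: "\<And>i j. 1 \<le> j \<Longrightarrow> (j \<le> card {j'. 1 \<le> j' \<and> j' \<le> L \<and> Suc i \<le> s j'}) = (Suc i \<le> s j)"
  proof -
    fix i j :: nat assume j: "1 \<le> j"
    define S where "S = {j'. 1 \<le> j' \<and> j' \<le> L \<and> Suc i \<le> s j'}"
    have fS: "finite S" unfolding S_def by (rule finite_subset[of _ "{1..L}"]) auto
    show "(j \<le> card {j'. 1 \<le> j' \<and> j' \<le> L \<and> Suc i \<le> s j'}) = (Suc i \<le> s j)"
      unfolding S_def[symmetric]
    proof
      assume h: "Suc i \<le> s j"
      then have jL: "j \<le> L" using szero[of j] by (cases "L < j") auto
      have "{1..j} \<subseteq> S"
      proof
        fix x assume x: "x \<in> {1..j}"
        then have "s j \<le> s x" using santi[of x j] by simp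
        then show "x \<in> S" unfolding S_def using x jL h by simp
      qed
      then have "card {1..j} \<le> card S" by (rule card_mono[OF fS])
      then show "j \<le> card S" by simp
    next
      assume h: "j \<le> card S"
      show "Suc i \<le> s j"
      proof (rule ccontr)
        assume nh: "\<not> Suc i \<le> s j"
        have "S \<subseteq> {1..j - 1}"
        proof
          fix x assume x: "x \<in> S"
          have "x < j"
          proof (rule ccontr)
            assume "\<not> x < j"
            then have "s x \<le> s j" using santi[of j x] j by simp
            then show False using x nh unfolding S_def by simp
          qed
          then show "x \<in> {1..j - 1}" using x unfolding S_def by auto
        qed
        then have "card S \<le> j - 1" using card_mono[of "{1..j-1}" S] by simp
        then show False using h j by simp
      qed
    qed
  qed
  have conjmu: "\<And>j. 1 \<le> j \<Longrightarrow> conj mu j = s j"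
  proof -
    fix j :: nat assume j: "1 \<le> j"
    have "{i. i < length mu \<and> j \<le> mu ! i} = {i. i < s 1 \<and> Suc i \<le> s j}"
      using key[OF j] nth len by auto
    also have "\<dots> = {i. i < s j}" using santi[of 1 j] j by auto
    finally show "conj mu j = s j" by (simp add: conj_def)
  qed
  have part: "is_partition mu"
    unfolding is_partition_def
  proof
    show "sorted_wrt (\<ge>) mu"
      unfolding sorted_wrt_iff_nth_less
    proof (intro allI impI)
      fix i j assume ij1: "i < j" and ij2: "j < length mu"
      note ij = ij1 ij2
      have "{j'. 1 \<le> j' \<and> j' \<le> L \<and> Suc j \<le> s j'} \<subseteq> {j'. 1 \<le> j' \<and> j' \<le> L \<and> Suc i \<le> s j'}"
        using ij by auto
      then have "card {j'. 1 \<le> j' \<and> j' \<le> L \<and> Suc j \<le> s j'} \<le> card {j'. 1 \<le> j' \<and> j' \<le> L \<and> Suc i \<le> s j'}"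
        by (rule card_mono[rotated]) (rule finite_subset[of _ "{1..L}"], auto)
      then show "mu ! j \<le> mu ! i" using ij nth len by simp
    qed
  next
    show "0 \<notin> set mu"
    proof
      assume "0 \<in> set mu"
      then obtain i where i: "i < length mu" "mu ! i = 0" by (auto simp: in_set_conv_nth)
      have "1 \<le> mu ! i" using key[of 1 i] i nth len by simp
      then show False using i by simp
    qed
  qed
  have hd_max: "\<And>i. i < length mu \<Longrightarrow> mu ! i \<le> first_part mu"
  proof -
    fix i assume i: "i < length mu"
    then have ne: "mu \<noteq> []" by auto
    have "mu ! i \<le> mu ! 0"
    proof (cases i)
      case 0 then show ?thesis by simp
    next
      case (Suc i')
      have "\<forall>i j. i < j \<longrightarrow> j < length mu \<longrightarrow> mu ! j \<le> mu ! i"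
        using part unfolding is_partition_def sorted_wrt_iff_nth_less by blast
      then show ?thesis using i Suc by blast
    qed
    then show "mu ! i \<le> first_part mu" using ne by (simp add: first_part_def hd_conv_nth)
  qed
  have big0: "\<And>j. first_part mu < j \<Longrightarrow> M j = {}"
  proof -
    fix j assume j: "first_part mu < j"
    have "\<forall>i. i < length mu \<longrightarrow> \<not> j \<le> mu ! i"
    proof (intro allI impI)
      fix i assume "i < length mu"
      then have "mu ! i \<le> first_part mu" by (rule hd_max)
      then show "\<not> j \<le> mu ! i" using j by simp
    qed
    then have "{i. i < length mu \<and> j \<le> mu ! i} = {}" by blast
    then have "conj mu j = 0" by (simp add: conj_def)
    then have "s j = 0" using conjmu[of j] j by simp
    then show "M j = {}" using fin s_def by simp
  qed
  have MLQ: "M \<in> MLQ mu n"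
    unfolding MLQ_def
  proof (intro CollectI conjI allI impI)
    fix j :: nat assume j: "1 \<le> j \<and> j \<le> first_part mu"
    show "M j \<subseteq> {1..n}" by (rule MLset_sub[OF Mm])
    show "card (M j) = conj mu j" using conjmu[of j] j by (simp add: s_def)
  next
    fix j :: nat assume j: "j = 0 \<or> first_part mu < j"
    then show "M j = {}"
    proof
      assume "j = 0" then show ?thesis using Mm unfolding MLset_def by blast
    next
      assume "first_part mu < j" then show ?thesis by (rule big0)
    qed
  qed
  have maj0: "maj mu M = 0" unfolding maj_def
    by (rule maj_aux_zero) (use fin Mdom in auto)
  have nonneg: "\<forall>r i. 0 \<le> rhoQ_mult L n B r i" using mult_nonneg[OF Bm] by blast
  have lenT: "\<And>r. 1 \<le> r \<Longrightarrow> length (rhoQ L n B r) = conj mu r"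
  proof -
    fix r :: nat assume r: "1 \<le> r"
    show "length (rhoQ L n B r) = conj mu r"
    proof (cases "r \<le> L")
      case True
      have "length (rhoQ L n B r) = (\<Sum>i=1..L. nat (rhoQ_mult L n B r i))"
        using r True by (simp add: rhoQ_blk length_blk)
      also have "\<dots> = card (stage L n L B r)" using tele[OF Bm r, of L] True by simp
      finally show ?thesis using conjmu[OF r] Mst s_def by simp
    next
      case False
      then show ?thesis using conjmu[OF r] szero[of r] by (simp add: rhoQ_def)
    qed
  qed
  have colT: "\<And>r c. 1 \<le> r \<and> c < length (rhoQ L n B (r + 1)) \<Longrightarrow> rhoQ L n B r ! c < rhoQ L n B (r + 1) ! c"
  proof -
    fix r c :: nat assume rc: "1 \<le> r \<and> c < length (rhoQ L n B (r + 1))"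
    then have rL: "r + 1 \<le> L" by (cases "r + 1 \<le> L") (auto simp: rhoQ_def)
    have r1: "1 \<le> r" using rc by simp
    show "rhoQ L n B r ! c < rhoQ L n B (r + 1) ! c"
    proof (rule col_strict)
      show "sorted (rhoQ L n B r)" by (simp add: rhoQ_blk sorted_blk)
      show "sorted (rhoQ L n B (r + 1))" by (simp add: rhoQ_blk sorted_blk)
      show "c < length (rhoQ L n B (r + 1))" using rc by simp
      show "\<forall>v. length (filter (\<lambda>x. x \<le> v) (rhoQ L n B (r + 1))) \<le> length (filter (\<lambda>x. x < v) (rhoQ L n B r))"
      proof
        fix v
        have A: "length (filter (\<lambda>x. x \<le> v) (rhoQ L n B (r + 1))) =
           (if r + 1 \<le> min v L then card (stage L n (min v L) B (r + 1)) else 0)"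
          by (rule filt_blk_le[OF Bm]) (use rL in auto)
        have C: "length (filter (\<lambda>x. x < v) (rhoQ L n B r)) =
           (if r \<le> min (v - 1) L then card (stage L n (min (v - 1) L) B r) else 0)"
          by (rule filt_blk_lt[OF Bm r1]) (use rL in auto)
        show "length (filter (\<lambda>x. x \<le> v) (rhoQ L n B (r + 1))) \<le> length (filter (\<lambda>x. x < v) (rhoQ L n B r))"
        proof (cases "r + 1 \<le> min v L")
          case False
          then have "length (filter (\<lambda>x. x \<le> v) (rhoQ L n B (r + 1))) = 0" unfolding A by (rule if_not_P)
          then show ?thesis by simp
        next
          case True
          show ?thesis
          proof (cases "v \<le> L")
            case vL: True
            obtain k where k: "v = Suc k" using True by (cases v) auto
            have "card (stage L n (Suc k) B (r + 1)) \<le> card (stage L n k B (r + 1 - 1))"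
              by (rule factB[OF Bm]) (use True vL k r1 in auto)
            then show ?thesis using A C True vL k r1 by simp
          next
            case vL: False
            have "s (Suc r) \<le> s r" by (rule sdec[OF r1])
            then show ?thesis using A C True vL Mst s_def by simp
          qed
        qed
      qed
    qed
  qed
  have ssyt: "is_ssyt (rhoQ L n B) (conj mu)"
    unfolding is_ssyt_def
  proof (intro conjI allI impI ballI)
    show "rhoQ L n B 0 = []" by (simp add: rhoQ_def)
  next
    fix r :: nat assume "1 \<le> r" then show "length (rhoQ L n B r) = conj mu r" by (rule lenT)
  next
    fix r x assume "x \<in> set (rhoQ L n B r)"
    then have "x \<in> set (blk (\<lambda>i. nat (rhoQ_mult L n B r i)) L)" by (simp add: rhoQ_blk split: if_splits)
    then show "1 \<le> x" using set_blk[of "\<lambda>i. nat (rhoQ_mult L n B r i)" L] by auto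
  next
    fix r show "sorted (rhoQ L n B r)" by (simp add: rhoQ_blk sorted_blk)
  next
    fix r c assume "1 \<le> r \<and> c < length (rhoQ L n B (r + 1))"
    then show "rhoQ L n B r ! c < rhoQ L n B (r + 1) ! c" by (rule colT)
  qed
  have content: "\<forall>i. 1 \<le> i \<longrightarrow> (\<Sum>r\<in>{1..L}. count_list (rhoQ L n B r) i) = card (B i)"
  proof (intro allI impI)
    fix i :: nat assume i: "1 \<le> i"
    have e: "\<And>r. r \<in> {1..L} \<Longrightarrow> count_list (rhoQ L n B r) i = (if i \<le> L then nat (rhoQ_mult L n B r i) else 0)"
      using i by (simp add: rhoQ_blk count_blk)
    show "(\<Sum>r\<in>{1..L}. count_list (rhoQ L n B r) i) = card (B i)"
    proof (cases "i \<le> L")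
      case True
      then show ?thesis using e content_sum[OF Bm i True] by simp
    next
      case False
      then have "B i = {}" using Bm unfolding MLset_def by auto
      then show ?thesis using e False by simp
    qed
  qed
  show ?thesis
    using part s1n len MLQ maj0 nonneg ssyt content
    unfolding M_def MLQ0_def by auto
qed

end
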